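(* Let $\mathbf x_1,\dots,\mathbf x_l\in\mathbb{R}^n$ and $y_1,\dots,y_l\in\{1,-1\}$; set $\bar{\mathbf x}_i=y_i\mathbf x_i$ and let $\overline{\mathbf X}\in\mathbb{R}^{l\times n}$ have $i$-th row $\bar{\mathbf x}_i^T$. For $C>0$ consider the SVM problem $$\min_{\mathbf w}\tfrac12\|\mathbf w\|^2+C\sum_{i=1}^l\big[1-\mathbf w^T(y_i\mathbf x_i)\big]_+$$ with optimal solution $\mathbf w^*(C)$, and its dual $\min_{\theta\in[0,1]^l}\frac C2\|\overline{\mathbf X}^T\theta\|^2-\sum_{i=1}^l\theta_i$ with optimal solution $\theta^*(C)$. Let $0<C_1<\dots<C_{\mathcal K}$ and suppose $\theta^*(C_k)$ is known for some integer $1\le k<\mathcal K$. If $$\tfrac{C_{k+1}+C_k}{2}\langle\overline{\mathbf X}^T\theta^*(C_k),\bar{\mathbf x}_i\rangle-\tfrac{C_{k+1}-C_k}{2}\|\overline{\mathbf X}^T\theta^*(C_k)\|\,\|\bar{\mathbf x}_i\|>1,$$ then $[\theta^*(C_{k+1})]_i=0$, i.e., $i\in\mathcal R$ (at $C=C_{k+1}$). Similarly, if $$\tfrac{C_{k+1}+C_k}{2}\langle\overline{\mathbf X}^T\theta^*(C_k),\bar{\mathbf x}_i\rangle+\tfrac{C_{k+1}-C_k}{2}\|\overline{\mathbf X}^T\theta^*(C_k)\|\,\|\bar{\mathbf x}_i\|<1,$$ then $[\theta^*(C_{k+1})]_i=1$, i.e., $i\in\mathcal L$.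
   Context: $[t]_+=\max\{t,0\}$. Primal and dual solutions satisfy $\mathbf w^*(C)=C\overline{\mathbf X}^T\theta^*(C)$. At parameter $C$: $\mathcal R=\{i:\langle\mathbf w^*(C),\bar{\mathbf x}_i\rangle>1\}$ and $\mathcal L=\{i:\langle\mathbf w^*(C),\bar{\mathbf x}_i\rangle<1\}$. *)

theory Defs
  imports "HOL-Analysis.Analysis"
begin

text \<open>Training data: samples indexed by a finite type 'm (so l = CARD('m)),
  features in real^'n.  x i is the i-th sample, y i its label.\<close>

definition hinge :: "real \<Rightarrow> real" where
  "hinge t = max t 0"

definition xbar :: "('m \<Rightarrow> real^'n) \<Rightarrow> ('m \<Rightarrow> real) \<Rightarrow> 'm \<Rightarrow> real^'n" where
  "xbar x y i = y i *\<^sub>R x i"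

definition XbarT :: "('m::finite \<Rightarrow> real^'n) \<Rightarrow> ('m \<Rightarrow> real) \<Rightarrow> real^'m \<Rightarrow> real^'n" where
  "XbarT x y \<theta> = (\<Sum>i\<in>UNIV. (\<theta> $ i) *\<^sub>R xbar x y i)"

definition primal_obj :: "('m::finite \<Rightarrow> real^'n) \<Rightarrow> ('m \<Rightarrow> real) \<Rightarrow> real \<Rightarrow> real^'n \<Rightarrow> real" where
  "primal_obj x y C w = (1/2) * (norm w)\<^sup>2 + C * (\<Sum>i\<in>UNIV. hinge (1 - w \<bullet> (y i *\<^sub>R x i)))"

definition dual_obj :: "('m::finite \<Rightarrow> real^'n) \<Rightarrow> ('m \<Rightarrow> real) \<Rightarrow> real \<Rightarrow> real^'m \<Rightarrow> real" where
  "dual_obj x y C \<theta> = (C/2) * (norm (XbarT x y \<theta>))\<^sup>2 - (\<Sum>i\<in>UNIV. \<theta> $ i)"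

definition dual_feasible :: "real^'m \<Rightarrow> bool" where
  "dual_feasible \<theta> \<longleftrightarrow> (\<forall>i. 0 \<le> \<theta> $ i \<and> \<theta> $ i \<le> 1)"

definition primal_optimal :: "('m::finite \<Rightarrow> real^'n) \<Rightarrow> ('m \<Rightarrow> real) \<Rightarrow> real \<Rightarrow> real^'n \<Rightarrow> bool" where
  "primal_optimal x y C w \<longleftrightarrow> (\<forall>w'. primal_obj x y C w \<le> primal_obj x y C w')"

definition dual_optimal :: "('m::finite \<Rightarrow> real^'n) \<Rightarrow> ('m \<Rightarrow> real) \<Rightarrow> real \<Rightarrow> real^'m \<Rightarrow> bool" where
  "dual_optimal x y C \<theta> \<longleftrightarrow> dual_feasible \<theta> \<and>
     (\<forall>\<theta>'. dual_feasible \<theta>' \<longrightarrow> dual_obj x y C \<theta> \<le> dual_obj x y C \<theta>')"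

end

theory Submission
  imports Defs
begin

lemma XbarT_diff: "XbarT x y a - XbarT x y b = XbarT x y (a - b)"
  unfolding XbarT_def by (simp add: sum_subtractf[symmetric] scaleR_diff_left)

lemma XbarT_add: "XbarT x y a + XbarT x y b = XbarT x y (a + b)"
  unfolding XbarT_def by (simp add: sum.distrib[symmetric] scaleR_add_left)

lemma XbarT_scale: "t *\<^sub>R XbarT x y a = XbarT x y (t *\<^sub>R a)"
  unfolding XbarT_def by (simp add: scaleR_sum_right)

lemma XbarT_inner: "XbarT x y \<theta> \<bullet> v = (\<Sum>j\<in>UNIV. \<theta> $ j * (xbar x y j \<bullet> v))"
  unfolding XbarT_def by (simp add: inner_sum_left)

lemma small_t:
  fixes a b :: real
  assumes "b \<ge> 0" "\<forall>t. 0 < t \<and> t \<le> 1 \<longrightarrow> 0 \<le> a + t * b"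
  shows "0 \<le> a"
proof (rule ccontr)
  assume "\<not> 0 \<le> a"
  define t where "t = min 1 (-a / (2 * (b + 1)))"
  have t0: "0 < t" "t \<le> 1" using \<open>\<not> 0 \<le> a\<close> assms(1) by (auto simp: t_def intro!: divide_neg_pos)
  have "t * b \<le> (-a / (2 * (b + 1))) * b"
    using assms(1) by (intro mult_right_mono) (auto simp: t_def)
  also have "\<dots> < -a"
  proof -
    have "(-a / (2 * (b + 1))) * b = -a * (b / (2*(b+1)))" by simp
    moreover have "b / (2*(b+1)) < 1" using assms(1) by (simp add: divide_simps)
    ultimately show ?thesis using \<open>\<not> 0 \<le> a\<close>
      by (metis mult.right_neutral mult_strict_left_mono neg_0_less_iff_less not_le)
  qed
  finally show False using assms(2) t0 by force
qed

lemma VI: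
  assumes opt: "dual_optimal x y C \<theta>" and C: "C \<ge> 0" and f: "dual_feasible \<theta>'"
  shows "C * (XbarT x y \<theta> \<bullet> (XbarT x y \<theta>' - XbarT x y \<theta>))
          - ((\<Sum>j\<in>UNIV. \<theta>' $ j) - (\<Sum>j\<in>UNIV. \<theta> $ j)) \<ge> 0"
proof -
  define u where "u = XbarT x y \<theta>"
  define v where "v = XbarT x y \<theta>' - XbarT x y \<theta>"
  define s where "s = (\<Sum>j\<in>UNIV. \<theta>' $ j) - (\<Sum>j\<in>UNIV. \<theta> $ j)"
  have f0: "dual_feasible \<theta>" using opt by (simp add: dual_optimal_def)
  have "\<forall>t. 0 < t \<and> t \<le> 1 \<longrightarrow> 0 \<le> (C * (u \<bullet> v) - s) + t * (C/2 * (v \<bullet> v))"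
  proof (intro allI impI)
    fix t :: real assume t: "0 < t \<and> t \<le> 1"
    define th where "th = \<theta> + t *\<^sub>R (\<theta>' - \<theta>)"
    have "dual_feasible th"
      unfolding dual_feasible_def th_def
    proof
      fix j
      have a: "0 \<le> \<theta> $ j" "\<theta> $ j \<le> 1" "0 \<le> \<theta>' $ j" "\<theta>' $ j \<le> 1"
        using f f0 by (auto simp: dual_feasible_def)
      have "(\<theta> + t *\<^sub>R (\<theta>' - \<theta>)) $ j = (1 - t) * \<theta> $ j + t * \<theta>' $ j"
        by (simp add: algebra_simps)
      moreover have "0 \<le> (1 - t) * \<theta> $ j + t * \<theta>' $ j" using a t by simp
      moreover have "(1 - t) * \<theta> $ j + t * \<theta>' $ j \<le> (1 - t) * 1 + t * 1"
        using a t by (intro add_mono mult_left_mono) auto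
      ultimately show "0 \<le> (\<theta> + t *\<^sub>R (\<theta>' - \<theta>)) $ j \<and> (\<theta> + t *\<^sub>R (\<theta>' - \<theta>)) $ j \<le> 1"
        by simp
    qed
    hence le: "dual_obj x y C \<theta> \<le> dual_obj x y C th" using opt by (simp add: dual_optimal_def)
    have Xth: "XbarT x y th = u + t *\<^sub>R v"
      unfolding th_def u_def v_def
      by (simp add: XbarT_add[symmetric] XbarT_scale[symmetric] XbarT_diff)
    have sth: "(\<Sum>j\<in>UNIV. th $ j) = (\<Sum>j\<in>UNIV. \<theta> $ j) + t * s"
      unfolding th_def s_def
      by (simp add: sum.distrib sum_distrib_left sum_subtractf algebra_simps)
    have "dual_obj x y C th - dual_obj x y C \<theta>
          = C/2 * ((u + t *\<^sub>R v) \<bullet> (u + t *\<^sub>R v) - u \<bullet> u) - t * s"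
      unfolding dual_obj_def Xth sth u_def[symmetric] by (simp add: power2_norm_eq_inner algebra_simps)
    also have "\<dots> = t * ((C * (u \<bullet> v) - s) + t * (C/2 * (v \<bullet> v)))"
      by (simp add: inner_add inner_commute algebra_simps power2_eq_square)
    finally have "0 \<le> t * ((C * (u \<bullet> v) - s) + t * (C/2 * (v \<bullet> v)))" using le by simp
    thus "0 \<le> (C * (u \<bullet> v) - s) + t * (C/2 * (v \<bullet> v))" using t
      by (simp add: zero_le_mult_iff)
  qed
  hence "0 \<le> C * (u \<bullet> v) - s" by (rule small_t[rotated]) (use C in simp)
  thus ?thesis by (simp add: u_def v_def s_def)
qed

lemma coord:
  assumes opt: "dual_optimal x y D \<theta>" and D: "D \<ge> 0"
  shows "D * (XbarT x y \<theta> \<bullet> xbar x y i) > 1 \<Longrightarrow> \<theta> $ i = 0"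
    and "D * (XbarT x y \<theta> \<bullet> xbar x y i) < 1 \<Longrightarrow> \<theta> $ i = 1"
proof -
  have f0: "dual_feasible \<theta>" using opt by (simp add: dual_optimal_def)
  have key: "(s - \<theta> $ i) * (D * (XbarT x y \<theta> \<bullet> xbar x y i) - 1) \<ge> 0"
    if s: "0 \<le> s" "s \<le> 1" for s
  proof -
    define th where "th = (\<chi> j. if j = i then s else \<theta> $ j)"
    have "dual_feasible th" using f0 s by (auto simp: dual_feasible_def th_def)
    from VI[OF opt D this]
    have h: "D * (XbarT x y \<theta> \<bullet> (XbarT x y th - XbarT x y \<theta>))
          - ((\<Sum>j\<in>UNIV. th $ j) - (\<Sum>j\<in>UNIV. \<theta> $ j)) \<ge> 0" .
    have d: "th - \<theta> = (\<chi> j. if j = i then s - \<theta> $ i else 0)"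
      by (simp add: th_def vec_eq_iff)
    have e0: "XbarT x y th - XbarT x y \<theta> = XbarT x y (th - \<theta>)" by (rule XbarT_diff)
    have e1: "XbarT x y th - XbarT x y \<theta> = (s - \<theta> $ i) *\<^sub>R xbar x y i"
      unfolding e0 unfolding d XbarT_def
      by (simp add: if_distrib[of "\<lambda>c. c *\<^sub>R _"] cong: if_cong)
    have e2: "(\<Sum>j\<in>UNIV. th $ j) - (\<Sum>j\<in>UNIV. \<theta> $ j) = s - \<theta> $ i"
    proof -
      have "(\<Sum>j\<in>UNIV. th $ j) - (\<Sum>j\<in>UNIV. \<theta> $ j) = (\<Sum>j\<in>UNIV. (th - \<theta>) $ j)"
        by (simp add: sum_subtractf)
      also have "\<dots> = s - \<theta> $ i" unfolding d by simp
      finally show ?thesis .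
    qed
    have "D * (XbarT x y \<theta> \<bullet> ((s - \<theta> $ i) *\<^sub>R xbar x y i)) - (s - \<theta> $ i) \<ge> 0"
      using h unfolding e1 e2 .
    thus ?thesis by (simp add: algebra_simps)
  qed
  show "D * (XbarT x y \<theta> \<bullet> xbar x y i) > 1 \<Longrightarrow> \<theta> $ i = 0"
  proof -
    assume g: "D * (XbarT x y \<theta> \<bullet> xbar x y i) > 1"
    have "(0 - \<theta> $ i) * (D * (XbarT x y \<theta> \<bullet> xbar x y i) - 1) \<ge> 0" using key[of 0] by simp
    hence "\<theta> $ i \<le> 0" using g by (simp add: mult_le_0_iff)
    thus ?thesis using f0 by (simp add: dual_feasible_def) (meson order_antisym)
  qed
  show "D * (XbarT x y \<theta> \<bullet> xbar x y i) < 1 \<Longrightarrow> \<theta> $ i = 1"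
  proof -
    assume g: "D * (XbarT x y \<theta> \<bullet> xbar x y i) < 1"
    have "(1 - \<theta> $ i) * (D * (XbarT x y \<theta> \<bullet> xbar x y i) - 1) \<ge> 0" using key[of 1] by simp
    hence "\<theta> $ i \<ge> 1" using g by (simp add: zero_le_mult_iff)
    thus ?thesis using f0 by (simp add: dual_feasible_def) (meson order_antisym)
  qed
qed

lemma primal_bound:
  assumes opt: "dual_optimal x y D \<theta>" and D: "D \<ge> 0"
  shows "primal_obj x y D w' \<ge> primal_obj x y D (D *\<^sub>R XbarT x y \<theta>)
           + (1/2) * (norm (w' - D *\<^sub>R XbarT x y \<theta>))\<^sup>2"
proof -
  define u where "u = XbarT x y \<theta>"
  define w0 where "w0 = D *\<^sub>R u"
  have f0: "dual_feasible \<theta>" using opt by (simp add: dual_optimal_def)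
  have yx: "\<And>w j. w \<bullet> (y j *\<^sub>R x j) = w \<bullet> xbar x y j" by (simp add: xbar_def)
  have cs: "hinge (1 - w0 \<bullet> xbar x y j) = \<theta> $ j * (1 - w0 \<bullet> xbar x y j)" for j
  proof -
    have e: "w0 \<bullet> xbar x y j = D * (XbarT x y \<theta> \<bullet> xbar x y j)"
      by (simp add: w0_def u_def)
    consider "w0 \<bullet> xbar x y j > 1" | "w0 \<bullet> xbar x y j < 1" | "w0 \<bullet> xbar x y j = 1" by linarith
    thus ?thesis
    proof cases
      case 1 thus ?thesis using coord(1)[OF opt D, of j] e by (simp add: hinge_def)
    next
      case 2 thus ?thesis using coord(2)[OF opt D, of j] e by (simp add: hinge_def)
    qed (simp add: hinge_def)
  qed
  have hb: "hinge (1 - w' \<bullet> xbar x y j) \<ge> \<theta> $ j * (1 - w' \<bullet> xbar x y j)" for j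
  proof -
    have a: "0 \<le> \<theta> $ j" "\<theta> $ j \<le> 1" using f0 by (auto simp: dual_feasible_def)
    show ?thesis
    proof (cases "1 - w' \<bullet> xbar x y j \<ge> 0")
      case True
      hence "\<theta> $ j * (1 - w' \<bullet> xbar x y j) \<le> 1 * (1 - w' \<bullet> xbar x y j)"
        using a by (intro mult_right_mono) auto
      thus ?thesis by (simp add: hinge_def)
    next
      case False thus ?thesis using a by (simp add: hinge_def mult_nonneg_nonpos)
    qed
  qed
  have sumeq: "\<And>v. (\<Sum>j\<in>UNIV. \<theta> $ j * (1 - v \<bullet> xbar x y j)) = (\<Sum>j\<in>UNIV. \<theta> $ j) - u \<bullet> v"
  proof -
    fix v
    have "u \<bullet> v = (\<Sum>j\<in>UNIV. \<theta> $ j * (v \<bullet> xbar x y j))"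
      unfolding u_def XbarT_inner by (simp add: inner_commute)
    thus "(\<Sum>j\<in>UNIV. \<theta> $ j * (1 - v \<bullet> xbar x y j)) = (\<Sum>j\<in>UNIV. \<theta> $ j) - u \<bullet> v"
      by (simp add: right_diff_distrib sum_subtractf)
  qed
  have P0: "primal_obj x y D w0 = (1/2) * (w0 \<bullet> w0) + D * ((\<Sum>j\<in>UNIV. \<theta> $ j) - u \<bullet> w0)"
    unfolding primal_obj_def yx by (simp add: cs sumeq power2_norm_eq_inner)
  have "primal_obj x y D w' \<ge> (1/2) * (w' \<bullet> w') + D * ((\<Sum>j\<in>UNIV. \<theta> $ j) - u \<bullet> w')"
    unfolding primal_obj_def yx sumeq[symmetric] power2_norm_eq_inner
    using D hb by (intro add_left_mono mult_left_mono sum_mono) auto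
  moreover have "(1/2) * (w' \<bullet> w') + D * ((\<Sum>j\<in>UNIV. \<theta> $ j) - u \<bullet> w')
      = primal_obj x y D w0 + (1/2) * (norm (w' - w0))\<^sup>2"
    unfolding P0 unfolding power2_norm_eq_inner w0_def
    by (simp add: inner_diff inner_commute algebra_simps)
  ultimately show ?thesis by (simp add: w0_def u_def)
qed

lemma primal_eq:
  assumes opt: "dual_optimal x y D \<theta>" and D: "D \<ge> 0" and p: "primal_optimal x y D w"
  shows "w = D *\<^sub>R XbarT x y \<theta>"
proof -
  have "primal_obj x y D w \<le> primal_obj x y D (D *\<^sub>R XbarT x y \<theta>)"
    using p by (simp add: primal_optimal_def)
  with primal_bound[OF opt D, of w] have "(norm (w - D *\<^sub>R XbarT x y \<theta>))\<^sup>2 \<le> 0" by linarith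
  hence "(norm (w - D *\<^sub>R XbarT x y \<theta>))\<^sup>2 = 0" using zero_le_power2 antisym by metis
  hence "norm (w - D *\<^sub>R XbarT x y \<theta>) = 0" by simp
  thus ?thesis by simp
qed

lemma alg_ball:
  fixes a b c C D :: real
  assumes "C*D*c + D^2*a \<le> (C+D)*D*b"
  shows "D^2*a - (C+D)*D*b + ((C+D)/2)^2*c \<le> ((D-C)/2)^2*c"
proof -
  have "((C+D)/2)^2*c = ((D-C)/2)^2*c + C*D*c" by (simp add: power2_eq_square field_simps)
  thus ?thesis using assms by linarith
qed

theorem corollary3:
  fixes x :: "'m::finite \<Rightarrow> real^'n" and y :: "'m \<Rightarrow> real"
    and Cs :: "nat \<Rightarrow> real" and K k :: nat and i :: 'm
    and \<theta>k \<theta>k1 :: "real^'m"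
  assumes labels: "\<forall>j. y j = 1 \<or> y j = -1"
    and Cpos: "0 < Cs 1"
    and Cinc: "\<forall>j. 1 \<le> j \<and> j < K \<longrightarrow> Cs j < Cs (Suc j)"
    and krange: "1 \<le> k" "k < K"
    and optk: "dual_optimal x y (Cs k) \<theta>k"
    and optk1: "dual_optimal x y (Cs (Suc k)) \<theta>k1"
  shows
    "((Cs (Suc k) + Cs k)/2 * (XbarT x y \<theta>k \<bullet> xbar x y i)
        - (Cs (Suc k) - Cs k)/2 * norm (XbarT x y \<theta>k) * norm (xbar x y i) > 1
      \<longrightarrow> \<theta>k1 $ i = 0 \<and>
          (\<forall>w. primal_optimal x y (Cs (Suc k)) w \<longrightarrow> w \<bullet> xbar x y i > 1))
   \<and> ((Cs (Suc k) + Cs k)/2 * (XbarT x y \<theta>k \<bullet> xbar x y i)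
        + (Cs (Suc k) - Cs k)/2 * norm (XbarT x y \<theta>k) * norm (xbar x y i) < 1
      \<longrightarrow> \<theta>k1 $ i = 1 \<and>
          (\<forall>w. primal_optimal x y (Cs (Suc k)) w \<longrightarrow> w \<bullet> xbar x y i < 1))"
proof -
  define C where "C = Cs k"
  define D where "D = Cs (Suc k)"
  have pos: "\<forall>j. 1 \<le> j \<longrightarrow> j \<le> K \<longrightarrow> 0 < Cs j"
  proof (intro allI)
    fix j show "1 \<le> j \<longrightarrow> j \<le> K \<longrightarrow> 0 < Cs j"
    proof (induction j)
      case (Suc j)
      show ?case
      proof (cases "j = 0")
        case True thus ?thesis using Cpos by simp
      next
        case False
        show ?thesis
        proof (intro impI)
          assume "Suc j \<le> K"
          hence a: "1 \<le> j" "j < K" using False by auto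
          hence "0 < Cs j" using Suc.IH by simp
          moreover have "Cs j < Cs (Suc j)" using Cinc a by blast
          ultimately show "0 < Cs (Suc j)" by simp
        qed
      qed
    qed simp
  qed
  have C0: "0 < C" using pos krange by (simp add: C_def)
  have CD: "C < D" using Cinc krange by (simp add: C_def D_def)
  define u0 where "u0 = XbarT x y \<theta>k"
  define u1 where "u1 = XbarT x y \<theta>k1"
  define xi where "xi = xbar x y i"
  define w1 where "w1 = D *\<^sub>R u1"
  define m where "m = ((C + D)/2) *\<^sub>R u0"
  define r where "r = (D - C)/2 * norm u0"
  have f0: "dual_feasible \<theta>k" "dual_feasible \<theta>k1"
    using optk optk1 by (auto simp: dual_optimal_def)
  have v1: "C * (u0 \<bullet> (u1 - u0)) - ((\<Sum>j\<in>UNIV. \<theta>k1 $ j) - (\<Sum>j\<in>UNIV. \<theta>k $ j)) \<ge> 0"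
    using VI[OF optk[folded C_def] _ f0(2)] C0 by (simp add: u0_def u1_def)
  have v2: "D * (u1 \<bullet> (u0 - u1)) - ((\<Sum>j\<in>UNIV. \<theta>k $ j) - (\<Sum>j\<in>UNIV. \<theta>k1 $ j)) \<ge> 0"
    using VI[OF optk1[folded D_def] _ f0(1)] C0 CD by (simp add: u0_def u1_def)
  have s: "C * (u0 \<bullet> u1 - u0 \<bullet> u0) + D * (u0 \<bullet> u1 - u1 \<bullet> u1) \<ge> 0"
    using v1 v2 by (simp add: inner_diff inner_commute algebra_simps)
  hence s2: "D * (C * (u0 \<bullet> u1 - u0 \<bullet> u0) + D * (u0 \<bullet> u1 - u1 \<bullet> u1)) \<ge> 0"
    using C0 CD by simp
  have "(norm (w1 - m))\<^sup>2 = D^2 * (u1 \<bullet> u1) - (C + D) * D * (u0 \<bullet> u1) + ((C+D)/2)^2 * (u0 \<bullet> u0)"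
    unfolding power2_norm_eq_inner w1_def m_def
    by (simp add: inner_diff inner_commute algebra_simps power2_eq_square) (simp add: field_simps)
  also have "\<dots> \<le> ((D-C)/2)^2 * (u0 \<bullet> u0)"
    by (rule alg_ball) (use s2 in \<open>simp add: algebra_simps power2_eq_square\<close>)
  also have "\<dots> = r^2"
    unfolding r_def power_mult_distrib power2_norm_eq_inner ..
  finally have sq: "(norm (w1 - m))\<^sup>2 \<le> r^2" .
  have r0: "0 \<le> r" using CD unfolding r_def by simp
  have nr: "norm (w1 - m) \<le> r" by (rule power2_le_imp_le[OF sq r0])
  have "\<bar>(w1 - m) \<bullet> xi\<bar> \<le> norm (w1 - m) * norm xi" by (rule Cauchy_Schwarz_ineq2)
  also have "\<dots> \<le> r * norm xi" by (rule mult_right_mono[OF nr norm_ge_zero])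
  finally have cs: "\<bar>(w1 - m) \<bullet> xi\<bar> \<le> r * norm xi" .
  have rx: "r * norm xi = (D - C) / 2 * norm u0 * norm xi" by (simp add: r_def)
  have cs1: "(w1 - m) \<bullet> xi \<le> r * norm xi" "-(r * norm xi) \<le> (w1 - m) \<bullet> xi"
    using cs by (simp_all add: abs_le_iff)
  have cd: "(C + D)/2 = (D + C)/2" by simp
  have w1x: "w1 \<bullet> xi = (D + C)/2 * (u0 \<bullet> xi) + (w1 - m) \<bullet> xi"
    by (simp add: m_def inner_diff_left add.commute)
  have w1d: "w1 \<bullet> xi = D * (XbarT x y \<theta>k1 \<bullet> xbar x y i)" by (simp add: w1_def u1_def xi_def)
  have peq: "\<And>w. primal_optimal x y D w \<Longrightarrow> w = w1"
    using primal_eq[OF optk1[folded D_def]] C0 CD by (simp add: w1_def u1_def)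
  show ?thesis
    unfolding C_def[symmetric] D_def[symmetric] u0_def[symmetric] xi_def[symmetric]
  proof (intro conjI impI)
    assume h: "(D + C) / 2 * (u0 \<bullet> xi) - (D - C) / 2 * norm u0 * norm xi > 1"
    have g: "w1 \<bullet> xi > 1" using h w1x cs1 rx cd by linarith
    show "\<theta>k1 $ i = 0" using coord(1)[OF optk1[folded D_def], of i] g w1d C0 CD by simp
    show "\<forall>w. primal_optimal x y D w \<longrightarrow> 1 < w \<bullet> xi" using peq g by auto
  next
    assume h: "(D + C) / 2 * (u0 \<bullet> xi) + (D - C) / 2 * norm u0 * norm xi < 1"
    have g: "w1 \<bullet> xi < 1" using h w1x cs1 rx cd by linarith
    show "\<theta>k1 $ i = 1" using coord(2)[OF optk1[folded D_def], of i] g w1d C0 CD by simp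
    show "\<forall>w. primal_optimal x y D w \<longrightarrow> w \<bullet> xi < 1" using peq g by auto
  qed
qed

end
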